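(* Let $a,b\in\mathbb{O}$ have norm one and let $\Phi:\mathbb{O}\to\mathbb{O}$ be a linear map. The following are equivalent: (1) $\Phi$ is an automorphism of $\mathbb{O}$ with $\Phi(a)=b$; (2) $\Phi$ is an algebra isomorphism from ${}^*\mathbb{O}_l(a,1)$ onto ${}^*\mathbb{O}_l(b,1)$ with $\Phi(1)=1$.
   Context: $\mathbb{O}$ is the real octonion algebra with conjugation $x\mapsto\bar x$. For norm-one $a\in\mathbb{O}$, ${}^*\mathbb{O}_l(a,1)$ is the normed space of $\mathbb{O}$ with product $x\odot y=(\bar x a)y$; it is an absolute-valued algebra with left unit $a$. *)

theory Defs
  imports "HOL-Analysis.Analysis"
begin

text \<open>Real octonions via the Cayley--Dickson construction, with the convention
  (a,b)(c,d) = (a c - d^* b, d a + b c^*), (a,b)^* = (a^*, -b).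
  The norm inherited from the product types is the Euclidean norm on R^8.\<close>

type_synonym quat = "complex \<times> complex"
type_synonym oct = "quat \<times> quat"

definition qmul :: "quat \<Rightarrow> quat \<Rightarrow> quat" where
  "qmul x y = (fst x * fst y - cnj (snd y) * snd x, snd y * fst x + snd x * cnj (fst y))"

definition qconj :: "quat \<Rightarrow> quat" where
  "qconj x = (cnj (fst x), - snd x)"

definition omul :: "oct \<Rightarrow> oct \<Rightarrow> oct" where
  "omul x y = (qmul (fst x) (fst y) - qmul (qconj (snd y)) (snd x),
               qmul (snd y) (fst x) + qmul (snd x) (qconj (fst y)))"

definition oconj :: "oct \<Rightarrow> oct" where
  "oconj x = (qconj (fst x), - snd x)"

definition oone :: oct where
  "oone = ((1, 0), (0, 0))"

text \<open>The product of *O_l(a,1): x \<odot> y = (conj x * a) * y.\<close>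
definition star_mul :: "oct \<Rightarrow> oct \<Rightarrow> oct \<Rightarrow> oct" where
  "star_mul a x y = omul (omul (oconj x) a) y"

definition alg_iso :: "(oct \<Rightarrow> oct \<Rightarrow> oct) \<Rightarrow> (oct \<Rightarrow> oct \<Rightarrow> oct) \<Rightarrow> (oct \<Rightarrow> oct) \<Rightarrow> bool" where
  "alg_iso m1 m2 \<Phi> \<longleftrightarrow> linear \<Phi> \<and> bij \<Phi> \<and> (\<forall>x y. \<Phi> (m1 x y) = m2 (\<Phi> x) (\<Phi> y))"

definition oct_automorphism :: "(oct \<Rightarrow> oct) \<Rightarrow> bool" where
  "oct_automorphism \<Phi> \<longleftrightarrow> alg_iso omul omul \<Phi>"

end

theory Submission imports Defs begin
lemma oct_ext: "(x::oct) = y \<longleftrightarrow> Re (fst (fst x)) = Re (fst (fst y)) \<and> Im (fst (fst x)) = Im (fst (fst y)) \<and>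
 Re (snd (fst x)) = Re (snd (fst y)) \<and> Im (snd (fst x)) = Im (snd (fst y)) \<and>
 Re (fst (snd x)) = Re (fst (snd y)) \<and> Im (fst (snd x)) = Im (fst (snd y)) \<and>
 Re (snd (snd x)) = Re (snd (snd y)) \<and> Im (snd (snd x)) = Im (snd (snd y))"
  by (auto simp: prod_eq_iff complex_eq_iff)
lemmas osimps = oct_ext omul_def oconj_def qmul_def qconj_def oone_def
lemma oone_l: "omul oone x = x" by (simp add: osimps)
lemma oone_r: "omul x oone = x" by (simp add: osimps)
lemma conj_conj: "oconj (oconj x) = x" by (simp add: osimps)
lemma omul_add_l: "omul (x+y) z = omul x z + omul y z" by (simp add: osimps algebra_simps)
lemma omul_add_r: "omul z (x+y) = omul z x + omul z y" by (simp add: osimps algebra_simps)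
lemma omul_scale_l: "omul (c *\<^sub>R x) z = c *\<^sub>R omul x z" by (simp add: osimps algebra_simps)
lemma omul_scale_r: "omul z (c *\<^sub>R x) = c *\<^sub>R omul z x" by (simp add: osimps algebra_simps)
lemma onorm2: "norm (x::oct) ^ 2 = (Re (fst (fst x)))^2 + (Im (fst (fst x)))^2 + (Re (snd (fst x)))^2 + (Im (snd (fst x)))^2
  + (Re (fst (snd x)))^2 + (Im (fst (snd x)))^2 + (Re (snd (snd x)))^2 + (Im (snd (snd x)))^2"
proof -
  have p: "norm (p, q) ^ 2 = norm p ^ 2 + norm q ^ 2" for p :: "'z::real_normed_vector" and q :: "'w::real_normed_vector"
    by (simp add: norm_Pair)
  show ?thesis by (cases x) (auto simp: p cmod_power2)
qed
lemma sq: "omul x x = (2 * Re (fst (fst x))) *\<^sub>R x - (norm x ^ 2) *\<^sub>R oone"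
  unfolding onorm2 by (simp add: osimps algebra_simps power2_eq_square)
lemma conj_eq: "oconj x = (2 * Re (fst (fst x))) *\<^sub>R oone - x" by (simp add: osimps)
lemma alt: "norm a = 1 \<Longrightarrow> omul (omul u (oconj a)) a = u"
proof -
  assume "norm a = 1" then have h: "norm a ^ 2 = 1" by simp
  have "omul (omul u (oconj a)) a = (norm a ^ 2) *\<^sub>R u"
    unfolding onorm2 by (simp add: osimps algebra_simps power2_eq_square) 
  then show ?thesis using h by simp
qed
lemma conj_one: "oconj oone = oone" by (simp add: osimps)

lemma aut_one: assumes "oct_automorphism \<Phi>" shows "\<Phi> oone = oone"
proof -
  from assms have m: "\<And>x y. \<Phi> (omul x y) = omul (\<Phi> x) (\<Phi> y)" and "bij \<Phi>"
    unfolding oct_automorphism_def alg_iso_def by auto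
  then obtain y where y: "\<Phi> y = oone" by (metis bij_pointE)
  have "\<Phi> oone = omul (\<Phi> oone) (\<Phi> y)" using y oone_r by simp
  also have "\<dots> = \<Phi> (omul oone y)" using m by simp
  finally show ?thesis using y oone_l by simp
qed

lemma aut_conj: assumes "oct_automorphism \<Phi>" shows "\<Phi> (oconj x) = oconj (\<Phi> x)"
proof -
  from assms have m: "\<And>x y. \<Phi> (omul x y) = omul (\<Phi> x) (\<Phi> y)" and b: "bij \<Phi>" and l: "linear \<Phi>"
    unfolding oct_automorphism_def alg_iso_def by auto
  have one: "\<Phi> oone = oone" using aut_one[OF assms] .
  define t where "t = (\<lambda>x::oct. 2 * Re (fst (fst x)))"
  have tsc: "t (c *\<^sub>R oone) = 2 * c" for c by (simp add: t_def oone_def)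
  have e1: "\<Phi> (omul x x) = t x *\<^sub>R \<Phi> x - (norm x ^ 2) *\<^sub>R oone"
    unfolding sq t_def using l one by (simp add: linear_diff linear_scale)
  have e2: "\<Phi> (omul x x) = t (\<Phi> x) *\<^sub>R \<Phi> x - (norm (\<Phi> x) ^ 2) *\<^sub>R oone"
    using m[of x x] sq[of "\<Phi> x"] by (simp add: t_def)
  have eq: "(t x - t (\<Phi> x)) *\<^sub>R \<Phi> x = (norm x ^ 2 - norm (\<Phi> x) ^ 2) *\<^sub>R oone"
    using e1 e2 by (simp add: algebra_simps)
  have tt: "t x = t (\<Phi> x)"
  proof (rule ccontr)
    assume ne: "t x \<noteq> t (\<Phi> x)"
    define c where "c = (norm x ^ 2 - norm (\<Phi> x) ^ 2) / (t x - t (\<Phi> x))"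
    have "\<Phi> x = c *\<^sub>R oone" using eq ne unfolding c_def
      by (metis (no_types, lifting) divide_inverse_commute eq_vector_fraction_iff right_minus_eq)
    also have "\<dots> = \<Phi> (c *\<^sub>R oone)" using l one by (simp add: linear_scale)
    finally have "x = c *\<^sub>R oone" using b by (meson bij_is_inj injD)
    then have "t x = 2*c" "t (\<Phi> x) = 2*c" using \<open>\<Phi> x = c *\<^sub>R oone\<close> tsc by auto
    with ne show False by simp
  qed
  have "\<Phi> (oconj x) = \<Phi> (t x *\<^sub>R oone - x)" unfolding conj_eq t_def ..
  also have "\<dots> = t x *\<^sub>R oone - \<Phi> x" using l one by (simp add: linear_diff linear_scale)
  also have "\<dots> = oconj (\<Phi> x)" using tt by (simp add: conj_eq t_def)
  finally show ?thesis .
qed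

theorem proposition4:
  fixes a b :: oct and \<Phi> :: "oct \<Rightarrow> oct"
  assumes "norm a = 1" and "norm b = 1" and "linear \<Phi>"
  shows "(oct_automorphism \<Phi> \<and> \<Phi> a = b) \<longleftrightarrow>
         (alg_iso (star_mul a) (star_mul b) \<Phi> \<and> \<Phi> oone = oone)"
proof
  assume h: "oct_automorphism \<Phi> \<and> \<Phi> a = b"
  then have m: "\<And>x y. \<Phi> (omul x y) = omul (\<Phi> x) (\<Phi> y)" and "bij \<Phi>"
    unfolding oct_automorphism_def alg_iso_def by auto
  show "alg_iso (star_mul a) (star_mul b) \<Phi> \<and> \<Phi> oone = oone"
    unfolding alg_iso_def star_mul_def
    using m aut_conj[of \<Phi>] aut_one[of \<Phi>] h \<open>bij \<Phi>\<close> assms(3) by simp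
next
  assume h: "alg_iso (star_mul a) (star_mul b) \<Phi> \<and> \<Phi> oone = oone"
  then have m: "\<And>x y. \<Phi> (omul (omul (oconj x) a) y) = omul (omul (oconj (\<Phi> x)) b) (\<Phi> y)"
    and bj: "bij \<Phi>" and one: "\<Phi> oone = oone"
    unfolding alg_iso_def star_mul_def by auto
  have m1: "\<Phi> (omul (oconj x) a) = omul (oconj (\<Phi> x)) b" for x
    using m[of x oone] one by (simp add: oone_r)
  have "\<Phi> a = b" using m1[of oone] one by (simp add: conj_one oone_l)
  moreover have "\<Phi> (omul u y) = omul (\<Phi> u) (\<Phi> y)" for u y
  proof -
    define x where "x = oconj (omul u (oconj a))"
    have u: "omul (oconj x) a = u" unfolding x_def conj_conj using alt[OF assms(1)] .
    show ?thesis using m[of x y] m1[of x] u by simp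
  qed
  ultimately show "oct_automorphism \<Phi> \<and> \<Phi> a = b"
    unfolding oct_automorphism_def alg_iso_def using bj assms(3) by simp
qed

end
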